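(* Let $(X,d)$ be a finite ultrametric space with $|X|\geqslant 2$ whose diametral graph $G_d$ is complete bipartite, $G_d=G[X_1,X_2]$. If $(X_i,d)\in\mathfrak U$ for $i=1,2$ and $\operatorname{Sp}(X_1)\cap\operatorname{Sp}(X_2)=\varnothing$, then $(X,d)\in\mathfrak U$.
   Context: $\operatorname{Sp}(X)=\{d(x,y):x,y\in X,\ x\neq y\}$ (empty for one-point spaces); $\operatorname{diam}X=\max d(x,y)$. $\mathfrak U$ is the class of finite ultrametric spaces $X$ with $|\operatorname{Sp}(X)|=|X|-1$. The diametral graph $G_d$ has vertex set $X$ and edges the pairs $\{u,v\}$ with $d(u,v)=\operatorname{diam}X$; $G[X_1,X_2]$ is the complete bipartite graph with parts $X_1,X_2$. $(X_i,d)$ denotes the subspace with the restricted metric. *)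

theory Defs
  imports Complex_Main
begin

definition ultrametric_on :: "'a set \<Rightarrow> ('a \<Rightarrow> 'a \<Rightarrow> real) \<Rightarrow> bool" where
  "ultrametric_on X d \<longleftrightarrow>
     (\<forall>x\<in>X. \<forall>y\<in>X. d x y \<ge> 0) \<and>
     (\<forall>x\<in>X. \<forall>y\<in>X. d x y = 0 \<longleftrightarrow> x = y) \<and>
     (\<forall>x\<in>X. \<forall>y\<in>X. d x y = d y x) \<and>
     (\<forall>x\<in>X. \<forall>y\<in>X. \<forall>z\<in>X. d x y \<le> max (d x z) (d z y))"

definition Sp :: "'a set \<Rightarrow> ('a \<Rightarrow> 'a \<Rightarrow> real) \<Rightarrow> real set" where
  "Sp X d = {d x y | x y. x \<in> X \<and> y \<in> X \<and> x \<noteq> y}"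

definition diam :: "'a set \<Rightarrow> ('a \<Rightarrow> 'a \<Rightarrow> real) \<Rightarrow> real" where
  "diam X d = Max {d x y | x y. x \<in> X \<and> y \<in> X}"

definition in_U :: "'a set \<Rightarrow> ('a \<Rightarrow> 'a \<Rightarrow> real) \<Rightarrow> bool" where
  "in_U X d \<longleftrightarrow> finite X \<and> X \<noteq> {} \<and> ultrametric_on X d \<and> card (Sp X d) = card X - 1"

definition diam_edge :: "'a set \<Rightarrow> ('a \<Rightarrow> 'a \<Rightarrow> real) \<Rightarrow> 'a \<Rightarrow> 'a \<Rightarrow> bool" where
  "diam_edge X d u v \<longleftrightarrow> u \<in> X \<and> v \<in> X \<and> u \<noteq> v \<and> d u v = diam X d"

definition diam_graph_complete_bipartite ::
  "'a set \<Rightarrow> ('a \<Rightarrow> 'a \<Rightarrow> real) \<Rightarrow> 'a set \<Rightarrow> 'a set \<Rightarrow> bool" where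
  "diam_graph_complete_bipartite X d X1 X2 \<longleftrightarrow>
     X1 \<noteq> {} \<and> X2 \<noteq> {} \<and> X1 \<inter> X2 = {} \<and> X1 \<union> X2 = X \<and>
     (\<forall>u v. diam_edge X d u v \<longleftrightarrow> (u \<in> X1 \<and> v \<in> X2) \<or> (u \<in> X2 \<and> v \<in> X1))"

end

theory Submission
  imports Defs
begin

theorem corollary15:
  fixes X X1 X2 :: "'a set" and d :: "'a \<Rightarrow> 'a \<Rightarrow> real"
  assumes "finite X" and "card X \<ge> 2"
    and "ultrametric_on X d"
    and "diam_graph_complete_bipartite X d X1 X2"
    and "in_U X1 d" and "in_U X2 d"
    and "Sp X1 d \<inter> Sp X2 d = {}"
  shows "in_U X d"
proof -
  note B = assms(4)[unfolded diam_graph_complete_bipartite_def]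
  let ?D = "diam X d"
  have fin: "finite {d x y | x y. x \<in> X \<and> y \<in> X}"
  proof -
    have "{d x y | x y. x \<in> X \<and> y \<in> X} = (\<lambda>(x,y). d x y) ` (X \<times> X)" by auto
    thus ?thesis using assms(1) by simp
  qed
  have le: "d x y \<le> ?D" if "x \<in> X" "y \<in> X" for x y
    unfolding diam_def using fin that by (intro Max_ge) auto
  have X1: "X1 \<subseteq> X" and X2: "X2 \<subseteq> X" using B by auto
  have lt': "d x y < ?D" if "x \<in> Xi" "y \<in> Xi" "x \<noteq> y" "Xi = X1 \<or> Xi = X2" for x y Xi
  proof -
    have "\<not> diam_edge X d x y" using B that by blast
    moreover have "x \<in> X" "y \<in> X" using that X1 X2 by auto
    ultimately have "d x y \<noteq> ?D" using that unfolding diam_edge_def by auto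
    thus ?thesis using le \<open>x \<in> X\<close> \<open>y \<in> X\<close> by fastforce
  qed
  have SpX: "Sp X d = Sp X1 d \<union> Sp X2 d \<union> {?D}"
  proof
    show "Sp X d \<subseteq> Sp X1 d \<union> Sp X2 d \<union> {?D}"
    proof
      fix r assume "r \<in> Sp X d"
      then obtain x y where r: "r = d x y" "x \<in> X" "y \<in> X" "x \<noteq> y" unfolding Sp_def by auto
      show "r \<in> Sp X1 d \<union> Sp X2 d \<union> {?D}"
      proof (cases "(x \<in> X1 \<and> y \<in> X2) \<or> (x \<in> X2 \<and> y \<in> X1)")
        case True
        hence "diam_edge X d x y" using B by blast
        thus ?thesis using r unfolding diam_edge_def by auto
      next
        case False
        hence "(x \<in> X1 \<and> y \<in> X1) \<or> (x \<in> X2 \<and> y \<in> X2)" using B r by blast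
        thus ?thesis using r unfolding Sp_def by blast
      qed
    qed
  next
    obtain a where a: "a \<in> X1" using B by blast
    obtain b where b: "b \<in> X2" using B by blast
    have "diam_edge X d a b" using B a b by blast
    hence "?D \<in> Sp X d" unfolding diam_edge_def Sp_def by (metis (mono_tags, lifting) mem_Collect_eq)
    moreover have "Sp X1 d \<subseteq> Sp X d" "Sp X2 d \<subseteq> Sp X d" using X1 X2 unfolding Sp_def by blast+
    ultimately show "Sp X1 d \<union> Sp X2 d \<union> {?D} \<subseteq> Sp X d" by blast
  qed
  have n1: "?D \<notin> Sp X1 d" using lt'[of _ X1] unfolding Sp_def by fastforce
  have n2: "?D \<notin> Sp X2 d" using lt'[of _ X2] unfolding Sp_def by fastforce
  have f1: "finite (Sp X1 d)" and f2: "finite (Sp X2 d)"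
  proof -
    have "Sp X d \<subseteq> {d x y | x y. x \<in> X \<and> y \<in> X}" unfolding Sp_def by blast
    hence "finite (Sp X d)" using fin finite_subset by blast
    thus "finite (Sp X1 d)" "finite (Sp X2 d)" using SpX by auto
  qed
  have "card (Sp X d) = card (Sp X1 d) + card (Sp X2 d) + 1"
    using SpX n1 n2 f1 f2 assms(7) by (simp add: card_Un_disjoint)
  also have "\<dots> = (card X1 - 1) + (card X2 - 1) + 1" using assms(5,6) unfolding in_U_def by simp
  also have "\<dots> = card X - 1"
  proof -
    have "card X = card X1 + card X2" using B assms(1) X1 X2
      by (metis card_Un_disjoint finite_subset)
    moreover have "card X1 \<ge> 1" "card X2 \<ge> 1" using assms(5,6) unfolding in_U_def
      by (auto simp: Suc_le_eq card_gt_0_iff)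
    ultimately show ?thesis by simp
  qed
  finally show ?thesis unfolding in_U_def using assms(1,3) B by auto
qed

end
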